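(* Let $A,B\in\mathcal M_n$ be accretive with $W(A),W(B)\subset S_\alpha$ for some $0\le\alpha<\pi/2$. Then $$\cos^3(\alpha)\,\Re\big[(A\nabla B)\sharp(A!B)\big]\le \Re(A\sharp B)\le \sec^2(\alpha)\,\Re\big[(A\nabla B)\sharp(A!B)\big].$$
   Context: A matrix $A$ is accretive if $\Re A=\frac{A+A^*}{2}$ is positive definite. $W(A)=\{\langle Ax,x\rangle:\|x\|=1\}$ is the numerical range, and $S_\alpha=\{z\in\mathbb C:\Re z>0,\ |\Im z|\le\tan(\alpha)\Re z\}$. For Hermitian $X,Y$, $X\le Y$ means $Y-X$ is positive semidefinite. For accretive $A,B$: $A\nabla B=\frac{A+B}{2}$, $A!B=\big(\frac{A^{-1}+B^{-1}}{2}\big)^{-1}$, and $A\sharp B=A\sharp_{1/2}B$ where $A\sharp_\lambda B=\frac{\sin(\lambda\pi)}{\pi}\int_0^\infty t^{\lambda-1}(A^{-1}+tB^{-1})^{-1}dt$. *)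

theory Defs
  imports "HOL-Analysis.Analysis"
begin

definition cinner :: "complex^'n \<Rightarrow> complex^'n \<Rightarrow> complex" where
  "cinner x y = (\<Sum>i\<in>UNIV. x$i * cnj (y$i))"

definition adjoint_mat :: "complex^'n^'n \<Rightarrow> complex^'n^'n" where
  "adjoint_mat A = (\<chi> i j. cnj (A$j$i))"

definition hermitian_mat :: "complex^'n^'n \<Rightarrow> bool" where
  "hermitian_mat A \<longleftrightarrow> adjoint_mat A = A"

definition ReM :: "complex^'n^'n \<Rightarrow> complex^'n^'n" where
  "ReM A = (A + adjoint_mat A) /\<^sub>R 2"

definition pos_def :: "complex^'n^'n \<Rightarrow> bool" where
  "pos_def H \<longleftrightarrow> hermitian_mat H \<and> (\<forall>x. x \<noteq> 0 \<longrightarrow> Re (cinner (H *v x) x) > 0)"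

definition pos_semidef :: "complex^'n^'n \<Rightarrow> bool" where
  "pos_semidef H \<longleftrightarrow> hermitian_mat H \<and> (\<forall>x. Re (cinner (H *v x) x) \<ge> 0)"

definition loewner_le :: "complex^'n^'n \<Rightarrow> complex^'n^'n \<Rightarrow> bool" where
  "loewner_le X Y \<longleftrightarrow> pos_semidef (Y - X)"

definition accretive :: "complex^'n^'n \<Rightarrow> bool" where
  "accretive A \<longleftrightarrow> pos_def (ReM A)"

definition numerical_range :: "complex^'n^'n \<Rightarrow> complex set" where
  "numerical_range A = {cinner (A *v x) x | x. norm x = 1}"

definition sector :: "real \<Rightarrow> complex set" where
  "sector \<alpha> = {z. Re z > 0 \<and> \<bar>Im z\<bar> \<le> tan \<alpha> * Re z}"

definition arith_mean :: "complex^'n^'n \<Rightarrow> complex^'n^'n \<Rightarrow> complex^'n^'n" where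
  "arith_mean A B = (A + B) /\<^sub>R 2"

definition harm_mean :: "complex^'n^'n \<Rightarrow> complex^'n^'n \<Rightarrow> complex^'n^'n" where
  "harm_mean A B = matrix_inv ((matrix_inv A + matrix_inv B) /\<^sub>R 2)"

text \<open>Weighted geometric mean via the integral representation.\<close>
definition wgeo_mean :: "real \<Rightarrow> complex^'n^'n \<Rightarrow> complex^'n^'n \<Rightarrow> complex^'n^'n" where
  "wgeo_mean l A B = (sin (l * pi) / pi) *\<^sub>R
     integral {0<..} (\<lambda>t. (t powr (l - 1)) *\<^sub>R matrix_inv (matrix_inv A + t *\<^sub>R matrix_inv B))"

definition geo_mean :: "complex^'n^'n \<Rightarrow> complex^'n^'n \<Rightarrow> complex^'n^'n" where
  "geo_mean A B = wgeo_mean (1/2) A B"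

end

theory Submission
  imports Defs
begin


lemma scaleR_comp: "((c::real) *\<^sub>R (x::complex^'n)) $ i = of_real c * x $ i"
  unfolding vector_scaleR_component by (simp add: scaleR_conv_of_real)

lemma scaleR_comp2: "((c::real) *\<^sub>R (x::complex^'n^'m)) $ i $ j = of_real c * x $ i $ j"
  unfolding vector_scaleR_component by (simp add: scaleR_conv_of_real)

lemma cinner_add_left: "cinner (x + y) z = cinner x z + cinner y z"
  by (simp add: cinner_def distrib_right sum.distrib)

lemma cinner_scaleR_left: "cinner (c *\<^sub>R x) z = of_real c * cinner x z"
  unfolding cinner_def scaleR_comp by (simp add: sum_distrib_left mult.assoc)

lemma cinner_scaleR_right: "cinner x (c *\<^sub>R z) = of_real c * cinner x z"
  unfolding cinner_def scaleR_comp by (simp add: sum_distrib_left mult.assoc mult.left_commute)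

lemma cinner_cnj: "cinner y x = cnj (cinner x y)"
  by (simp add: cinner_def mult.commute)

lemma cinner_self: "cinner x x = of_real (norm x ^ 2)"
proof -
  have "norm x ^ 2 = (\<Sum>i\<in>UNIV. (cmod (x$i))^2)"
    by (simp add: norm_vec_def L2_set_def sum_nonneg)
  then show ?thesis
    by (simp add: cinner_def complex_norm_square[symmetric])
qed

lemma cinner_adj: "cinner (M *v x) y = cinner x (adjoint_mat M *v y)"
proof -
  have "cinner (M *v x) y = (\<Sum>i\<in>UNIV. \<Sum>j\<in>UNIV. M$i$j * x$j * cnj (y$i))"
    unfolding cinner_def matrix_vector_mult_def by (simp add: sum_distrib_right)
  also have "\<dots> = (\<Sum>j\<in>UNIV. \<Sum>i\<in>UNIV. M$i$j * x$j * cnj (y$i))"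
    by (rule sum.swap)
  also have "\<dots> = cinner x (adjoint_mat M *v y)"
    unfolding cinner_def matrix_vector_mult_def adjoint_mat_def
    by (simp add: sum_distrib_left mult_ac)
  finally show ?thesis .
qed

lemma adjoint_adjoint[simp]: "adjoint_mat (adjoint_mat M) = M"
  by (simp add: adjoint_mat_def vec_eq_iff)

lemma cinner_CS: "cmod (cinner x y) \<le> norm x * norm y"
proof -
  have "cmod (cinner x y) \<le> (\<Sum>i\<in>UNIV. cmod (x$i) * cmod (y$i))"
    unfolding cinner_def by (rule order_trans[OF norm_sum]) (simp add: norm_mult)
  also have "\<dots> = (\<Sum>i\<in>UNIV. \<bar>cmod (x$i)\<bar> * \<bar>cmod (y$i)\<bar>)" by simp
  also have "\<dots> \<le> L2_set (\<lambda>i. cmod (x$i)) UNIV * L2_set (\<lambda>i. cmod (y$i)) UNIV"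
    by (rule L2_set_mult_ineq)
  finally show ?thesis by (simp add: norm_vec_def)
qed

lemma mv_scaleR: "(M::complex^'n^'m) *v (c *\<^sub>R x) = c *\<^sub>R (M *v x)"
  unfolding vec_eq_iff matrix_vector_mult_def scaleR_comp
  by (simp add: sum_distrib_left mult_ac)

lemma mv_scaleR_left: "(c *\<^sub>R (M::complex^'n^'m)) *v x = c *\<^sub>R (M *v x)"
  unfolding vec_eq_iff matrix_vector_mult_def scaleR_comp scaleR_comp2
  by (simp add: sum_distrib_left mult_ac)

lemma adj_Re: "Re (cinner (adjoint_mat M *v x) x) = Re (cinner (M *v x) x)"
  by (metis cinner_adj cinner_cnj cnj.simps(1))

definition accr :: "complex^'n^'n \<Rightarrow> bool" where
  "accr M \<longleftrightarrow> (\<forall>x. x \<noteq> 0 \<longrightarrow> Re (cinner (M *v x) x) > 0)"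

lemma ReM_Re: "Re (cinner (ReM M *v x) x) = Re (cinner (M *v x) x)"
  unfolding ReM_def mv_scaleR_left matrix_vector_mult_add_rdistrib cinner_scaleR_left cinner_add_left
  using adj_Re[of M x] by simp

lemma accretive_accr: "accretive A \<Longrightarrow> accr A"
  unfolding accretive_def pos_def_def accr_def using ReM_Re by metis



lemma Re_scale2: "Re (cinner (M *v (c *\<^sub>R x)) (c *\<^sub>R x)) = c^2 * Re (cinner (M *v x) x)"
  by (simp add: mv_scaleR cinner_scaleR_left cinner_scaleR_right power2_eq_square)

lemma cont_quad: "continuous_on S (\<lambda>x. Re (cinner ((M::complex^'n^'n) *v x) x))"
  unfolding cinner_def matrix_vector_mult_def
  by (intro continuous_intros)

lemma norm_axis_c: "norm (axis j (1::complex)) = 1"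
proof -
  have "(\<Sum>i\<in>UNIV. (norm ((axis j (1::complex))$i))^2) = (\<Sum>i\<in>UNIV. if i = j then 1 else 0)"
    by (rule sum.cong) (auto simp: axis_def)
  then show ?thesis unfolding norm_vec_def L2_set_def by simp
qed

lemma accr_coercive:
  fixes M :: "complex^'n^'n"
  assumes "accr M"
  shows "\<exists>a>0. \<forall>x. a * norm x ^ 2 \<le> Re (cinner (M *v x) x)"
proof -
  let ?f = "\<lambda>x. Re (cinner ((M::complex^'n^'n) *v x) x)"
  have ne: "sphere (0::complex^'n) 1 \<noteq> {}"
    by (metis norm_axis_c mem_sphere_0 empty_iff)
  obtain x0 where x0: "x0 \<in> sphere 0 1" and mn: "\<And>y. y \<in> sphere 0 1 \<Longrightarrow> ?f x0 \<le> ?f y"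
    using continuous_attains_inf[OF compact_sphere ne cont_quad] by blast
  have "x0 \<noteq> 0" using x0 by auto
  then have pos: "?f x0 > 0" using assms unfolding accr_def by auto
  have "?f x0 * norm x ^ 2 \<le> ?f x" for x
  proof (cases "x = 0")
    case True then show ?thesis by (simp add: cinner_def)
  next
    case False
    let ?y = "(1 / norm x) *\<^sub>R x"
    have "?y \<in> sphere 0 1" using False by auto
    then have "?f x0 \<le> ?f ?y" by (rule mn)
    also have "?f ?y = (1/norm x)^2 * ?f x" by (rule Re_scale2)
    finally have "?f x0 \<le> ?f x / norm x ^ 2" by (simp add: power_divide)
    then show ?thesis using False by (simp add: field_simps)
  qed
  then show ?thesis using pos by blast
qed

lemma coercive_norm:
  assumes "c > 0" "\<And>x. c * norm x ^ 2 \<le> Re (cinner (M *v x) x)"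
  shows "c * norm x \<le> norm (M *v x)"
proof (cases "x = 0")
  case True then show ?thesis by simp
next
  case False
  have "c * norm x ^ 2 \<le> Re (cinner (M *v x) x)" by (rule assms)
  also have "\<dots> \<le> cmod (cinner (M *v x) x)" by (rule complex_Re_le_cmod)
  also have "\<dots> \<le> norm (M *v x) * norm x" by (rule cinner_CS)
  finally have "(c * norm x) * norm x \<le> norm (M *v x) * norm x" by (simp add: power2_eq_square mult_ac)
  then show ?thesis using False by simp
qed

lemma accr_invertible:
  assumes "accr M" shows "invertible M"
proof -
  have "\<forall>x. M *v x = 0 \<longrightarrow> x = 0"
    using assms unfolding accr_def by (auto simp: cinner_def)
  then show ?thesis
    using matrix_left_invertible_ker invertible_left_inverse by blast
qed

lemma matrix_inv_props:
  fixes M :: "'a::field^'n^'n"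
  assumes "invertible M"
  shows "M ** matrix_inv M = mat 1" "matrix_inv M ** M = mat 1"
proof -
  have "\<exists>A'. M ** A' = mat 1 \<and> A' ** M = mat 1" using assms unfolding invertible_def .
  then have "M ** matrix_inv M = mat 1 \<and> matrix_inv M ** M = mat 1"
    unfolding matrix_inv_def by (rule someI_ex)
  then show "M ** matrix_inv M = mat 1" "matrix_inv M ** M = mat 1" by auto
qed

lemma inv_unique:
  fixes M :: "'a::field^'n^'n"
  assumes "M ** X = mat 1"
  shows "matrix_inv M = X"
proof -
  have inv: "invertible M" using assms invertible_right_inverse by blast
  have "matrix_inv M = matrix_inv M ** (M ** X)" using assms by simp
  also have "\<dots> = X" by (simp add: matrix_mul_assoc matrix_inv_props[OF inv])
  finally show ?thesis .
qed

lemma inv_unique_left: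
  fixes M :: "'a::field^'n^'n"
  assumes "X ** M = mat 1"
  shows "matrix_inv M = X"
  using assms inv_unique matrix_left_right_inverse by blast

lemma inv_inv:
  fixes M :: "'a::field^'n^'n"
  assumes "invertible M" shows "matrix_inv (matrix_inv M) = M"
  by (rule inv_unique) (simp add: matrix_inv_props[OF assms])

lemma accr_inv:
  fixes M :: "complex^'n^'n"
  assumes "accr M" shows "accr (matrix_inv M)"
  unfolding accr_def
proof (intro allI impI)
  fix y :: "complex^'n" assume y: "y \<noteq> 0"
  have inv: "invertible M" by (rule accr_invertible[OF assms])
  let ?x = "matrix_inv M *v y"
  have Mx: "M *v ?x = y" by (simp add: matrix_vector_mul_assoc matrix_inv_props[OF inv])
  then have "?x \<noteq> 0" using y by auto
  then have "Re (cinner (M *v ?x) ?x) > 0" using assms unfolding accr_def by auto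
  also have "Re (cinner (M *v ?x) ?x) = Re (cinner (matrix_inv M *v y) y)"
    using Mx cinner_cnj by (metis cnj.simps(1))
  finally show "Re (cinner (matrix_inv M *v y) y) > 0" .
qed

lemma accr_add:
  assumes "accr P" "accr Q" "s \<ge> 0" shows "accr (P + s *\<^sub>R Q)"
  using assms unfolding accr_def
  by (auto simp: matrix_vector_mult_add_rdistrib mv_scaleR_left cinner_add_left cinner_scaleR_left
      intro!: add_pos_nonneg)

lemma accr_scale:
  assumes "accr P" "s > 0" shows "accr (s *\<^sub>R P)"
  using assms unfolding accr_def
  by (auto simp: mv_scaleR_left cinner_scaleR_left)

lemma norm_vec_le_sum: "norm (v::'a::real_normed_vector^'n) \<le> (\<Sum>i\<in>UNIV. norm (v$i))"
  unfolding norm_vec_def by (rule L2_set_le_sum) simp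

lemma mv_axis: "((M::complex^'n^'n) *v axis j 1) $ i = M $ i $ j"
  by (simp add: matrix_vector_mult_def axis_def if_distrib cong: if_cong)

lemma inv_norm_bound:
  fixes N :: "complex^'n^'n"
  assumes inv: "invertible N" and c: "c > 0" and co: "\<And>x. c * norm x ^ 2 \<le> Re (cinner (N *v x) x)"
  shows "norm (matrix_inv N) \<le> real (CARD('n))^2 / c"
proof -
  have col: "norm (matrix_inv N *v axis j 1) \<le> 1 / c" for j
  proof -
    have "c * norm (matrix_inv N *v axis j 1) \<le> norm (N *v (matrix_inv N *v axis j 1))"
      by (rule coercive_norm[OF c co])
    also have "\<dots> = 1" by (simp add: matrix_vector_mul_assoc matrix_inv_props[OF inv] norm_axis_c)
    finally show ?thesis using c by (simp add: field_simps)
  qed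
  have ent: "cmod (matrix_inv N $ i $ j) \<le> 1 / c" for i j
    using Finite_Cartesian_Product.norm_nth_le[of "matrix_inv N *v axis j 1" i] col[of j] by (simp add: mv_axis)
  have "norm (matrix_inv N) \<le> (\<Sum>i\<in>UNIV. norm (matrix_inv N $ i))" by (rule norm_vec_le_sum)
  also have "\<dots> \<le> (\<Sum>i\<in>UNIV. \<Sum>j\<in>UNIV. cmod (matrix_inv N $ i $ j))"
    by (rule sum_mono) (rule norm_vec_le_sum)
  also have "\<dots> \<le> (\<Sum>i\<in>(UNIV::'n set). \<Sum>j\<in>(UNIV::'n set). 1 / c)"
    by (intro sum_mono ent)
  also have "\<dots> = real (CARD('n))^2 / c" by (simp add: power2_eq_square)
  finally show ?thesis .
qed



lemma mm_radd: "((A::'a::semiring_1^'n^'m) + B) ** C = A ** C + B ** C"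
  by (vector matrix_matrix_mult_def sum.distrib[symmetric] field_simps)

lemma mm_rdiff: "((A::'a::ring_1^'n^'m) - B) ** C = A ** C - B ** C"
  by (vector matrix_matrix_mult_def sum_subtractf[symmetric] field_simps)

lemma mm_ldiff: "(A::'a::ring_1^'n^'m) ** (B - C) = A ** B - A ** C"
  by (vector matrix_matrix_mult_def sum_subtractf[symmetric] field_simps)

lemma mm_sR_l: "(c *\<^sub>R (A::complex^'n^'m)) ** B = c *\<^sub>R (A ** B)"
  by (simp add: scalar_matrix_assoc)

lemma mm_sR_r: "(A::complex^'n^'m) ** (c *\<^sub>R B) = c *\<^sub>R (A ** B)"
  by (simp add: matrix_scalar_ac scalar_matrix_assoc)

lemmas mm_simps = matrix_add_ldistrib mm_radd mm_rdiff mm_ldiff mm_sR_l mm_sR_r matrix_mul_assoc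

lemma rassoc1: "(X::'a::semiring_1^'n^'n) ** Y = mat 1 \<Longrightarrow> Z ** X ** Y = Z"
  by (metis matrix_mul_assoc matrix_mul_rid)

lemma lc: "(x::'a::real_vector) - a *\<^sub>R q + b *\<^sub>R q - c *\<^sub>R r = x + (b - a) *\<^sub>R q - c *\<^sub>R r"
  by (simp add: algebra_simps)

lemma key_alg:
  fixes A B P Q S R1 R2 :: "complex^'n^'n" and u t :: real
  assumes PA: "P ** A = mat 1" and QB: "Q ** B = mat 1"
    and ST: "S ** (P + Q) = mat 1" and TS: "(P + Q) ** S = mat 1"
    and R1a: "R1 ** (P + u *\<^sub>R Q) = mat 1"
    and R2b: "(u *\<^sub>R P + Q) ** R2 = mat 1"
    and u: "0 < u" "u \<noteq> 1" and t: "t = 4 * u / (1 - u)^2"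
  shows "matrix_inv (matrix_inv ((A + B) /\<^sub>R 2) + t *\<^sub>R ((P + Q) /\<^sub>R 2))
         = ((1 - u)^2 / (2 * (1 + u))) *\<^sub>R (R1 + R2)"
proof -
  define T where "T = P + Q"
  define X where "X = Q ** S ** P"
  have S1: "X ** (A + B) = mat 1"
  proof -
    have "X ** (A + B) = Q ** S + Q ** S ** P ** B"
      unfolding X_def by (simp add: matrix_add_ldistrib rassoc1[OF PA])
    also have "\<dots> = Q ** S ** Q ** B + Q ** S ** P ** B" by (simp add: rassoc1[OF QB])
    also have "\<dots> = Q ** S ** (Q + P) ** B"
      by (simp add: matrix_add_ldistrib mm_radd matrix_mul_assoc)
    also have "\<dots> = Q ** B" using ST by (simp add: add.commute rassoc1)
    finally show ?thesis using QB by simp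
  qed
  have S2: "matrix_inv ((A + B) /\<^sub>R 2) = 2 *\<^sub>R X"
    by (rule inv_unique_left) (simp add: mm_sR_l mm_sR_r S1)
  have QST: "Q ** S ** T = Q" unfolding T_def using ST by (simp add: rassoc1)
  have QSP: "X = Q - Q ** S ** Q"
  proof -
    have "X = Q ** S ** (T - Q)" unfolding X_def T_def by simp
    also have "\<dots> = Q - Q ** S ** Q" by (simp add: mm_ldiff QST)
    finally show ?thesis .
  qed
  have e1: "u *\<^sub>R P + Q = u *\<^sub>R T + (1 - u) *\<^sub>R Q" unfolding T_def by (simp add: algebra_simps)
  have e2: "P + u *\<^sub>R Q = T - (1 - u) *\<^sub>R Q" unfolding T_def by (simp add: algebra_simps)
  have TS': "T ** S = mat 1" using TS T_def by simp
  have S3: "(u *\<^sub>R P + Q) ** S ** (P + u *\<^sub>R Q) = u *\<^sub>R T + (1 - u)^2 *\<^sub>R X"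
  proof -
    have "(u *\<^sub>R P + Q) ** S ** (P + u *\<^sub>R Q) = (u *\<^sub>R mat 1 + (1 - u) *\<^sub>R (Q ** S)) ** (T - (1 - u) *\<^sub>R Q)"
      unfolding e1 e2 by (simp add: mm_radd mm_sR_l TS')
    also have "\<dots> = ((u *\<^sub>R mat 1) ** T - (u *\<^sub>R mat 1) ** ((1 - u) *\<^sub>R Q))
       + (((1 - u) *\<^sub>R (Q ** S)) ** T - ((1 - u) *\<^sub>R (Q ** S)) ** ((1 - u) *\<^sub>R Q))"
      by (simp only: mm_radd mm_ldiff) (simp add: algebra_simps)
    also have "\<dots> = (u *\<^sub>R T - (u * (1 - u)) *\<^sub>R Q) + ((1 - u) *\<^sub>R (Q ** S ** T) - ((1 - u) * (1 - u)) *\<^sub>R (Q ** S ** Q))"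
      by (simp only: mm_sR_l mm_sR_r matrix_mul_lid scaleR_scaleR matrix_mul_assoc mult.commute[of "1-u" u])
    also have "\<dots> = u *\<^sub>R T - (u * (1 - u)) *\<^sub>R Q + (1 - u) *\<^sub>R (Q ** S ** T) - ((1 - u) * (1 - u)) *\<^sub>R (Q ** S ** Q)"
      by (simp only: add_diff_eq diff_add_eq)
    also have "\<dots> = u *\<^sub>R T + ((1 - u) - u * (1 - u)) *\<^sub>R Q - ((1 - u)^2) *\<^sub>R (Q ** S ** Q)"
      unfolding QST lc by (simp add: power2_eq_square)
    also have "(1 - u) - u * (1 - u) = (1 - u)^2" by (simp add: power2_eq_square algebra_simps)
    also have "u *\<^sub>R T + (1 - u)\<^sup>2 *\<^sub>R Q - (1 - u)\<^sup>2 *\<^sub>R (Q ** S ** Q) = u *\<^sub>R T + (1 - u)^2 *\<^sub>R X"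
      unfolding QSP by (simp add: algebra_simps)
    finally show ?thesis .
  qed
  define Z where "Z = 2 *\<^sub>R X + t *\<^sub>R (T /\<^sub>R 2)"
  have nz: "(1 - u)^2 \<noteq> 0" using u by simp
  have S4: "Z = (2 / (1 - u)^2) *\<^sub>R ((u *\<^sub>R P + Q) ** S ** (P + u *\<^sub>R Q))"
  proof -
    have "(2 / (1 - u)^2) * u = t / 2" unfolding t using nz by (simp add: field_simps)
    then show ?thesis unfolding S3 Z_def using nz
      by (simp add: scaleR_add_right)
  qed
  have S5: "R1 + R2 = (1 + u) *\<^sub>R (R1 ** T ** R2)"
  proof -
    have "(1 + u) *\<^sub>R (R1 ** T ** R2) = R1 ** ((u *\<^sub>R P + Q) + (P + u *\<^sub>R Q)) ** R2"
      unfolding T_def by (simp add: algebra_simps mm_sR_l mm_sR_r matrix_add_ldistrib mm_radd)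
    also have "\<dots> = R1 ** ((u *\<^sub>R P + Q) ** R2) + R1 ** (P + u *\<^sub>R Q) ** R2"
      by (simp add: matrix_add_ldistrib mm_radd matrix_mul_assoc)
    also have "\<dots> = R1 + R2" using R1a R2b by simp
    finally show ?thesis by simp
  qed
  have S6: "(R1 ** T ** R2) ** ((u *\<^sub>R P + Q) ** S ** (P + u *\<^sub>R Q)) = mat 1"
  proof -
    have "(R1 ** T ** R2) ** ((u *\<^sub>R P + Q) ** S ** (P + u *\<^sub>R Q)) = R1 ** T ** (R2 ** (u *\<^sub>R P + Q)) ** S ** (P + u *\<^sub>R Q)"
      by (simp add: matrix_mul_assoc)
    also have "R2 ** (u *\<^sub>R P + Q) = mat 1" using R2b matrix_left_right_inverse by blast
    also have "R1 ** T ** mat 1 ** S ** (P + u *\<^sub>R Q) = R1 ** (P + u *\<^sub>R Q)"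
      using TS' by (simp add: rassoc1)
    finally show ?thesis using R1a by simp
  qed
  have "(((1 - u)^2 / (2 * (1 + u))) *\<^sub>R (R1 + R2)) ** Z = mat 1"
  proof -
    have "(((1 - u)^2 / (2 * (1 + u))) *\<^sub>R (R1 + R2)) ** Z
        = (((1 - u)^2 / (2 * (1 + u))) * (1 + u) * (2 / (1 - u)^2)) *\<^sub>R
            ((R1 ** T ** R2) ** ((u *\<^sub>R P + Q) ** S ** (P + u *\<^sub>R Q)))"
      unfolding S5 S4 by (simp add: mm_sR_l mm_sR_r)
    also have "((1 - u)^2 / (2 * (1 + u))) * (1 + u) * (2 / (1 - u)^2) = 1"
    proof -
      have "1 + u \<noteq> 0" using u by simp
      moreover have "\<And>x y::real. x \<noteq> 0 \<Longrightarrow> y \<noteq> 0 \<Longrightarrow> x/(2*y)*y*(2/x) = 1" by (simp add: field_simps)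
      ultimately show ?thesis using nz by blast
    qed
    finally show ?thesis using S6 by simp
  qed
  then have "matrix_inv Z = ((1 - u)^2 / (2 * (1 + u))) *\<^sub>R (R1 + R2)"
    by (rule inv_unique_left)
  then show ?thesis unfolding Z_def S2 T_def .
qed



lemma mat_norm_cols:
  "norm (M::complex^'n^'n) \<le> (\<Sum>i\<in>(UNIV::'n set). \<Sum>j\<in>UNIV. norm (M *v axis j 1))"
proof -
  have ent: "cmod (M $ i $ j) \<le> norm (M *v axis j 1)" for i j
    using Finite_Cartesian_Product.norm_nth_le[of "M *v axis j 1" i] by (simp add: mv_axis)
  have "norm M \<le> (\<Sum>i\<in>UNIV. norm (M $ i))" by (rule norm_vec_le_sum)
  also have "\<dots> \<le> (\<Sum>i\<in>UNIV. \<Sum>j\<in>UNIV. cmod (M $ i $ j))"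
    by (rule sum_mono) (rule norm_vec_le_sum)
  also have "\<dots> \<le> (\<Sum>i\<in>(UNIV::'n set). \<Sum>j\<in>UNIV. norm (M *v axis j 1))"
    by (intro sum_mono ent)
  finally show ?thesis .
qed

lemma accr_setup:
  fixes P Q :: "complex^'n^'n"
  assumes "accr P" "accr Q"
  obtains a b where "a > 0" "b > 0"
    "\<And>t x. t \<ge> 0 \<Longrightarrow> (a + t * b) * norm x ^ 2 \<le> Re (cinner ((P + t *\<^sub>R Q) *v x) x)"
proof -
  obtain a where a: "a > 0" "\<And>x. a * norm x ^ 2 \<le> Re (cinner (P *v x) x)"
    using accr_coercive[OF assms(1)] by blast
  obtain b where b: "b > 0" "\<And>x. b * norm x ^ 2 \<le> Re (cinner (Q *v x) x)"
    using accr_coercive[OF assms(2)] by blast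
  have "(a + t * b) * norm x ^ 2 \<le> Re (cinner ((P + t *\<^sub>R Q) *v x) x)" if "t \<ge> 0" for t x
  proof -
    have "t * (b * norm x ^ 2) \<le> t * Re (cinner (Q *v x) x)"
      using b(2)[of x] that by (rule mult_left_mono)
    then show ?thesis using a(2)[of x]
      by (simp add: matrix_vector_mult_add_rdistrib mv_scaleR_left cinner_add_left cinner_scaleR_left algebra_simps)
  qed
  then show ?thesis using a b that by blast
qed

lemma res_facts:
  fixes P Q :: "complex^'n^'n"
  assumes "accr P" "accr Q"
  obtains a b where "a > 0" "b > 0"
     "\<And>t. t \<ge> 0 \<Longrightarrow> invertible (P + t *\<^sub>R Q)"
     "\<And>t. t \<ge> 0 \<Longrightarrow> norm (matrix_inv (P + t *\<^sub>R Q)) \<le> real (CARD('n))^2 / (a + t * b)"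
     "\<And>t z. t \<ge> 0 \<Longrightarrow> norm (matrix_inv (P + t *\<^sub>R Q) *v z) \<le> norm z / a"
proof -
  obtain a b where ab: "a > 0" "b > 0"
    and co: "\<And>t x. t \<ge> 0 \<Longrightarrow> (a + t * b) * norm x ^ 2 \<le> Re (cinner ((P + t *\<^sub>R Q) *v x) x)"
    using accr_setup[OF assms] by blast
  have inv: "invertible (P + t *\<^sub>R Q)" if t: "t \<ge> 0" for t
    using accr_invertible[OF accr_add[OF assms t]] .
  have n: "norm (matrix_inv (P + t *\<^sub>R Q)) \<le> real (CARD('n))^2 / (a + t * b)" if t: "t \<ge> 0" for t
  proof -
    have pos: "a + t * b > 0" using ab t by (simp add: add_pos_nonneg)
    show ?thesis by (rule inv_norm_bound[OF inv[OF t] pos co[OF t]])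
  qed
  have v: "norm (matrix_inv (P + t *\<^sub>R Q) *v z) \<le> norm z / a" if t: "t \<ge> 0" for t z
  proof -
    have co2: "a * norm x ^ 2 \<le> Re (cinner ((P + t *\<^sub>R Q) *v x) x)" for x
    proof -
      have "a * norm x ^ 2 \<le> (a + t * b) * norm x ^ 2" using ab t by (simp add: mult_right_mono)
      then show ?thesis using co[OF t, of x] by linarith
    qed
    have "a * norm (matrix_inv (P + t *\<^sub>R Q) *v z) \<le> norm ((P + t *\<^sub>R Q) *v (matrix_inv (P + t *\<^sub>R Q) *v z))"
      by (rule coercive_norm[OF ab(1) co2])
    also have "\<dots> = norm z" by (simp add: matrix_vector_mul_assoc matrix_inv_props[OF inv[OF t]])
    finally show ?thesis using ab by (simp add: field_simps)
  qed
  show thesis by (rule that[OF ab inv n v])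
qed

lemma res_cont:
  fixes P Q :: "complex^'n^'n"
  assumes "accr P" "accr Q"
  shows "continuous_on {0<..} (\<lambda>t. matrix_inv (P + t *\<^sub>R Q))"
proof -
  obtain a b where ab: "a > 0" "b > 0" and F: "\<And>t. t \<ge> 0 \<Longrightarrow> invertible (P + t *\<^sub>R Q)"
    "\<And>t z. t \<ge> 0 \<Longrightarrow> norm (matrix_inv (P + t *\<^sub>R Q) *v z) \<le> norm z / a"
    and "\<And>t. t \<ge> 0 \<Longrightarrow> norm (matrix_inv (P + t *\<^sub>R Q)) \<le> real (CARD('n))^2 / (a + t * b)"
    by (rule res_facts[OF assms]) blast+
  define R where "R t = matrix_inv (P + t *\<^sub>R Q)" for t
  have res: "R t - R s = (s - t) *\<^sub>R (R t ** Q ** R s)" if "t \<ge> 0" "s \<ge> 0" for t s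
  proof -
    have "R t ** ((P + s *\<^sub>R Q) - (P + t *\<^sub>R Q)) ** R s = R t ** (P + s *\<^sub>R Q) ** R s - R t ** (P + t *\<^sub>R Q) ** R s"
      by (simp only: mm_ldiff mm_rdiff)
    also have "\<dots> = R t - R s" unfolding R_def
      by (simp add: matrix_inv_props[OF F(1)[OF that(1)]] matrix_inv_props[OF F(1)[OF that(2)]]
          rassoc1 flip: matrix_mul_assoc)
    finally show ?thesis by (simp add: algebra_simps mm_sR_l mm_sR_r flip: scaleR_diff_left)
  qed
  define C where "C s = (\<Sum>i\<in>(UNIV::'n set). \<Sum>j\<in>(UNIV::'n set). norm ((Q ** R s) *v axis j 1) / a)" for s
  have bound: "norm (R t - R s) \<le> \<bar>t - s\<bar> * C s" if "t \<ge> 0" "s \<ge> 0" for t s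
  proof -
    have "norm (R t - R s) \<le> (\<Sum>i\<in>(UNIV::'n set). \<Sum>j\<in>UNIV. norm ((R t - R s) *v axis j 1))"
      by (rule mat_norm_cols)
    also have "\<dots> \<le> (\<Sum>i\<in>(UNIV::'n set). \<Sum>j\<in>(UNIV::'n set). \<bar>t - s\<bar> * (norm ((Q ** R s) *v axis j 1) / a))"
    proof (intro sum_mono)
      fix i j
      have "(R t - R s) *v axis j 1 = (s - t) *\<^sub>R (R t *v ((Q ** R s) *v axis j 1))"
        unfolding res[OF that] by (simp add: mv_scaleR_left matrix_vector_mul_assoc matrix_mul_assoc)
      also have "norm \<dots> = \<bar>t - s\<bar> * norm (R t *v ((Q ** R s) *v axis j 1))" by (simp add: abs_minus_commute)
      also have "\<dots> \<le> \<bar>t - s\<bar> * (norm ((Q ** R s) *v axis j 1) / a)"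
        unfolding R_def by (intro mult_left_mono F(2)[OF that(1)]) simp
      finally show "norm ((R t - R s) *v axis j 1) \<le> \<bar>t - s\<bar> * (norm ((Q ** R s) *v axis j 1) / a)" .
    qed
    also have "\<dots> = \<bar>t - s\<bar> * C s" unfolding C_def by (simp add: sum_distrib_left mult_ac)
    finally show ?thesis .
  qed
  have "isCont R s" if s: "s > 0" for s
  proof -
    have ev: "eventually (\<lambda>t. 0 < t) (at s)"
      using order_tendstoD(1)[OF tendsto_ident_at s] .
    have "((\<lambda>t. R t - R s) \<longlongrightarrow> 0) (at s)"
    proof (rule Lim_null_comparison)
      show "eventually (\<lambda>t. norm (R t - R s) \<le> \<bar>t - s\<bar> * C s) (at s)"
        using ev by eventually_elim (use s bound in auto)
      have "((\<lambda>t. \<bar>t - s\<bar> * C s) \<longlongrightarrow> \<bar>s - s\<bar> * C s) (at s)"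
        by (intro tendsto_intros)
      then show "((\<lambda>t. \<bar>t - s\<bar> * C s) \<longlongrightarrow> 0) (at s)" by simp
    qed
    then show ?thesis unfolding isCont_def by (rule LIM_zero_cancel)
  qed
  then show ?thesis unfolding R_def[abs_def] by (intro continuous_at_imp_continuous_on) auto
qed



definition gP :: "complex^'n^'n \<Rightarrow> complex^'n^'n \<Rightarrow> real \<Rightarrow> complex^'n^'n" where
  "gP P Q t = (t powr (1/2 - 1)) *\<^sub>R matrix_inv (P + t *\<^sub>R Q)"

lemma gP_cont:
  assumes "accr P" "accr Q"
  shows "continuous_on {0<..} (gP P Q)"
  unfolding gP_def[abs_def]
  by (intro continuous_on_scaleR continuous_on_powr continuous_on_id continuous_on_const res_cont[OF assms]) auto

lemma gP_meas:
  assumes "accr P" "accr Q" "S \<subseteq> {0<..}" "S \<in> sets lebesgue"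
  shows "gP P Q \<in> borel_measurable (lebesgue_on S)"
  using continuous_imp_measurable_on_sets_lebesgue[OF continuous_on_subset[OF gP_cont[OF assms(1,2)] assms(3)] assms(4)] .

lemma gP_absint:
  fixes P Q :: "complex^'n^'n"
  assumes "accr P" "accr Q"
  shows "gP P Q absolutely_integrable_on {0<..}"
proof -
  obtain a b where ab: "a > 0" "b > 0"
    and F: "\<And>t. t \<ge> 0 \<Longrightarrow> norm (matrix_inv (P + t *\<^sub>R Q)) \<le> real (CARD('n))^2 / (a + t * b)"
    by (rule res_facts[OF assms]) blast+
  let ?n = "real (CARD('n))^2"
  have nn: "?n \<ge> 0" by simp
  have nb: "norm (gP P Q t) \<le> t powr (1/2 - 1) * (?n / (a + t * b))" if "t > 0" for t
  proof -
    have "norm (gP P Q t) = t powr (1/2 - 1) * norm (matrix_inv (P + t *\<^sub>R Q))"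
      unfolding gP_def by simp
    also have "\<dots> \<le> t powr (1/2 - 1) * (?n / (a + t * b))"
      by (rule mult_left_mono[OF F]) (use that in auto)
    finally show ?thesis .
  qed
  have I1: "gP P Q absolutely_integrable_on {0<..1}"
  proof (rule measurable_bounded_by_integrable_imp_absolutely_integrable)
    show "gP P Q \<in> borel_measurable (lebesgue_on {0<..1})" by (rule gP_meas[OF assms]) auto
    show "{0<..1::real} \<in> sets lebesgue" by simp
    show "(\<lambda>t. (?n / a) * t powr (1/2 - 1)) integrable_on {0<..1}"
      using integrable_cmul[OF integrable_on_powr_from_0'[of "1/2-1" 1], of "?n/a"] by simp
    show "norm (gP P Q t) \<le> (?n / a) * t powr (1/2 - 1)" if "t \<in> {0<..1}" for t
    proof -
      have p: "a + t * b > 0" using that ab by (simp add: add_pos_pos)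
      have "?n / (a + t * b) \<le> ?n / a" using that ab nn mult_pos_pos[OF p ab(1)] by (intro divide_left_mono) auto
      then have "t powr (1/2 - 1) * (?n / (a + t * b)) \<le> t powr (1/2 - 1) * (?n / a)"
        by (intro mult_left_mono) auto
      then show ?thesis using nb[of t] that by (simp add: mult_ac)
    qed
  qed
  have I2: "gP P Q absolutely_integrable_on {1..}"
  proof (rule measurable_bounded_by_integrable_imp_absolutely_integrable)
    show "gP P Q \<in> borel_measurable (lebesgue_on {1..})" by (rule gP_meas[OF assms]) auto
    show "{1::real..} \<in> sets lebesgue" by simp
    show "(\<lambda>t. (?n / b) * t powr (1/2 - 1 - 1)) integrable_on {1..}"
    proof -
      have "(\<lambda>t. t powr (1/2 - 1 - 1)) integrable_on {1::real..}"
        using has_integral_powr_to_inf[of "1/2 - 1 - 1" 1] unfolding integrable_on_def by auto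
      from integrable_cmul[OF this, of "?n/b"] show ?thesis by simp
    qed
    show "norm (gP P Q t) \<le> (?n / b) * t powr (1/2 - 1 - 1)" if "t \<in> {1..}" for t
    proof -
      have t: "t > 0" using that by auto
      have p: "a + t * b > 0" "t * b > 0" using t ab by (simp_all add: add_pos_pos)
      have "?n / (a + t * b) \<le> ?n / (t * b)" using t ab nn mult_pos_pos[OF p] by (intro divide_left_mono) auto
      then have "t powr (1/2 - 1) * (?n / (a + t * b)) \<le> t powr (1/2 - 1) * (?n / (t * b))"
        by (intro mult_left_mono) auto
      also have "t powr (1/2 - 1) * (?n / (t * b)) = (?n / b) * t powr (1/2 - 1 - 1)"
      proof -
        have "t powr (1/2 - 1) = t powr (1 + (1/2 - 1 - 1))" by simp
        also have "\<dots> = t powr 1 * t powr (1/2 - 1 - 1)" by (rule powr_add)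
        finally have e: "t powr (1/2 - 1) = t * t powr (1/2 - 1 - 1)" using t by simp
        show ?thesis unfolding e using t ab by (simp add: field_simps)
      qed
      finally show ?thesis using nb[of t] t by simp
    qed
  qed
  have "{0<..1} \<union> {1..} = {0::real<..}" by auto
  then show ?thesis using absolutely_integrable_Un[OF I1 I2] by simp
qed



lemma powr_half_m1: "x > 0 \<Longrightarrow> x powr (1/2 - 1) = 1 / sqrt x"
proof -
  assume x: "x > 0"
  have e: "1/2 - 1 = - (1/2::real)" by simp
  have "x powr (1/2 - 1) = x powr (- (1/2))" unfolding e ..
  also have "\<dots> = inverse (x powr (1/2))" by (rule powr_minus)
  also have "x powr (1/2) = sqrt x" using x by (intro powr_half_sqrt) simp
  finally show ?thesis by (simp add: inverse_eq_divide)
qed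

lemma inv_scale:
  fixes M :: "complex^'n^'n"
  assumes "invertible M" "c \<noteq> 0"
  shows "matrix_inv (c *\<^sub>R M) = (1 / c) *\<^sub>R matrix_inv M"
  by (rule inv_unique) (use assms in \<open>simp add: mm_sR_l mm_sR_r matrix_inv_props\<close>)

lemma pointwise:
  fixes A B :: "complex^'n^'n" and u :: real
  assumes aA: "accr A" and aB: "accr B" and u: "0 < u" "u < 1"
  defines "P \<equiv> matrix_inv A" and "Q \<equiv> matrix_inv B"
  shows "\<bar>4 * (1 + u) / (1 - u)^3\<bar> *\<^sub>R
          ((4 * u / (1 - u)^2) powr (1/2 - 1) *\<^sub>R
            matrix_inv (matrix_inv ((A + B) /\<^sub>R 2) + (4 * u / (1 - u)^2) *\<^sub>R matrix_inv (matrix_inv ((P + Q) /\<^sub>R 2))))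
       = gP P Q u + (1 / u^2) *\<^sub>R gP P Q (1 / u)"
proof -
  have aP: "accr P" unfolding P_def by (rule accr_inv[OF aA])
  have aQ: "accr Q" unfolding Q_def by (rule accr_inv[OF aB])
  have PA: "P ** A = mat 1" unfolding P_def by (rule matrix_inv_props[OF accr_invertible[OF aA]])
  have QB: "Q ** B = mat 1" unfolding Q_def by (rule matrix_inv_props[OF accr_invertible[OF aB]])
  have aT: "accr (P + Q)" using accr_add[OF aP aQ, of 1] by simp
  have iT: "invertible (P + Q)" by (rule accr_invertible[OF aT])
  have aT2: "accr ((P + Q) /\<^sub>R 2)" using accr_scale[OF aT, of "1/2"] by simp
  have ii: "matrix_inv (matrix_inv ((P + Q) /\<^sub>R 2)) = (P + Q) /\<^sub>R 2"
    by (rule inv_inv[OF accr_invertible[OF aT2]])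
  define R1 where "R1 = matrix_inv (P + u *\<^sub>R Q)"
  define R2 where "R2 = matrix_inv (u *\<^sub>R P + Q)"
  have a1: "accr (P + u *\<^sub>R Q)" using accr_add[OF aP aQ] u by simp
  have a2: "accr (u *\<^sub>R P + Q)" using accr_add[OF aQ aP, of u] u by (simp add: add.commute)
  have R1a: "R1 ** (P + u *\<^sub>R Q) = mat 1" unfolding R1_def by (rule matrix_inv_props[OF accr_invertible[OF a1]])
  have R2b: "(u *\<^sub>R P + Q) ** R2 = mat 1" unfolding R2_def by (rule matrix_inv_props[OF accr_invertible[OF a2]])
  have K: "matrix_inv (matrix_inv ((A + B) /\<^sub>R 2) + (4 * u / (1 - u)^2) *\<^sub>R ((P + Q) /\<^sub>R 2))
         = ((1 - u)^2 / (2 * (1 + u))) *\<^sub>R (R1 + R2)"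
    by (rule key_alg[OF PA QB matrix_inv_props(2)[OF iT] matrix_inv_props(1)[OF iT] R1a R2b]) (use u in auto)
  have M: "matrix_inv (matrix_inv ((A + B) /\<^sub>R 2) + (4 * u / (1 - u)^2) *\<^sub>R matrix_inv (matrix_inv ((P + Q) /\<^sub>R 2)))
         = ((1 - u)^2 / (2 * (1 + u))) *\<^sub>R (R1 + R2)"
    unfolding ii by (rule K)
  define r where "r = sqrt u"
  have r: "r > 0" "r^2 = u" unfolding r_def using u by auto
  have g1: "gP P Q u = (1 / r) *\<^sub>R R1" unfolding gP_def R1_def r_def powr_half_m1[OF u(1)] by simp
  have "P + (1 / u) *\<^sub>R Q = (1 / u) *\<^sub>R (u *\<^sub>R P + Q)" using u by (simp add: algebra_simps)
  then have "matrix_inv (P + (1 / u) *\<^sub>R Q) = u *\<^sub>R R2"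
    unfolding R2_def using inv_scale[OF accr_invertible[OF a2], of "1/u"] u by simp
  then have g2: "(1 / u^2) *\<^sub>R gP P Q (1 / u) = (1 / r) *\<^sub>R R2"
    unfolding gP_def powr_half_m1[OF divide_pos_pos[OF zero_less_one u(1)]] using u r by (simp add: real_sqrt_divide r_def field_simps power2_eq_square)
  have sq: "sqrt (4 * u / (1 - u)^2) = 2 * r / (1 - u)"
    using u unfolding r_def by (simp add: real_sqrt_divide real_sqrt_mult)
  have pos: "4 * u / (1 - u)^2 > 0" using u by simp
  have coef: "\<bar>4 * (1 + u) / (1 - u)^3\<bar> * ((1 / (2 * r / (1 - u))) * ((1 - u)^2 / (2 * (1 + u)))) = 1 / r"
  proof -
    have "(1 - u)^3 > 0" using u by simp
    then have "\<bar>4 * (1 + u) / (1 - u)^3\<bar> = 4 * (1 + u) / (1 - u)^3" using u by simp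
    moreover have "1 - u \<noteq> 0" "1 + u \<noteq> 0" "r \<noteq> 0" using u r by auto
    moreover have "\<And>d e r::real. d \<noteq> 0 \<Longrightarrow> e \<noteq> 0 \<Longrightarrow> r \<noteq> 0 \<Longrightarrow>
        4*e/d^3 * ((1/(2*r/d)) * (d^2/(2*e))) = 1/r"
      by (simp add: field_simps power3_eq_cube power2_eq_square)
    ultimately show ?thesis by presburger
  qed
  show ?thesis
    unfolding M g1 g2 powr_half_m1[OF pos] sq scaleR_scaleR coef
    by (simp add: scaleR_add_right)
qed




lemma psi_inj: "inj_on (\<lambda>u::real. 4 * u / (1 - u)^2) {0<..<1}"
proof (rule inj_onI)
  fix u v :: real assume u: "u \<in> {0<..<1}" and v: "v \<in> {0<..<1}"
    and eq: "4 * u / (1 - u)^2 = 4 * v / (1 - v)^2"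
  have p: "(1 - u)^2 \<noteq> 0" "(1 - v)^2 \<noteq> 0" using u v by auto
  have e2: "u * (1 - v)^2 = v * (1 - u)^2"
  proof -
    have "4 * u * (1 - v)^2 = 4 * v * (1 - u)^2" using eq p by (simp add: divide_eq_eq eq_divide_eq)
    then show ?thesis by simp
  qed
  have "(u - v) * (1 - u * v) = u * (1 - v)^2 - v * (1 - u)^2" by (simp add: algebra_simps power2_eq_square)
  then have z: "(u - v) * (1 - u * v) = 0" using e2 by simp
  have "u * v < 1 * 1" using u v by (intro mult_strict_mono) auto
  then show "u = v" using z by simp
qed

lemma psi_deriv:
  assumes "x \<in> {0<..<1::real}"
  shows "((\<lambda>u. 4 * u / (1 - u)^2) has_field_derivative (4 * (1 + x) / (1 - x)^3)) (at x within {0<..<1})"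
proof -
  have x: "1 - x \<noteq> 0" using assms by auto
  have f': "((\<lambda>u. 4 * u) has_field_derivative 4) (at x within {0<..<1})"
    by (auto intro!: derivative_eq_intros)
  have g': "((\<lambda>u. (1 - u)^2) has_field_derivative (- 2 * (1 - x))) (at x within {0<..<1})"
    by (auto intro!: derivative_eq_intros)
  have gx: "(1 - x)^2 \<noteq> 0" using x by simp
  show ?thesis
  proof (rule DERIV_cong[OF DERIV_divide[OF f' g' gx]])
    show "(4 * (1 - x)\<^sup>2 - 4 * x * (- 2 * (1 - x))) / ((1 - x)\<^sup>2 * (1 - x)\<^sup>2) = 4 * (1 + x) / (1 - x) ^ 3"
    proof -
      have gen: "\<And>d::real. d \<noteq> 0 \<Longrightarrow> (4*d^2 - 4*(1-d)*(-2*d))/(d^2*d^2) = 4*(2-d)/d^3"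
        by (simp add: field_simps power2_eq_square power3_eq_cube)
      have "1 - (1 - x) = x" "2 - (1 - x) = 1 + x" by simp_all
      then show ?thesis using gen[OF x] by metis
    qed
  qed
qed

lemma inv_deriv:
  assumes "x \<in> {0<..<1::real}"
  shows "((\<lambda>u. 1 / u) has_field_derivative (- (1 / x^2))) (at x within {0<..<1})"
proof -
  have x: "x \<noteq> 0" using assms by auto
  have "((\<lambda>u. inverse u) has_field_derivative (- (inverse x ^ Suc (Suc 0)))) (at x within {0<..<1})"
    by (rule DERIV_inverse) (use x in simp)
  then show ?thesis by (simp add: inverse_eq_divide power2_eq_square)
qed

lemma inv_image: "(\<lambda>u::real. 1 / u) ` {0<..<1} = {1<..}"
proof
  show "(\<lambda>u::real. 1 / u) ` {0<..<1} \<subseteq> {1<..}"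
  proof
    fix y assume "y \<in> (\<lambda>u::real. 1 / u) ` {0<..<1}"
    then obtain u where u: "u \<in> {0<..<1}" "y = 1 / u" by blast
    then show "y \<in> {1<..}" by (simp add: less_divide_eq)
  qed
  show "{1<..} \<subseteq> (\<lambda>u::real. 1 / u) ` {0<..<1}"
  proof
    fix t :: real assume t: "t \<in> {1<..}"
    then have "1 / t \<in> {0<..<1}" by (simp add: divide_less_eq)
    moreover have "t = 1 / (1 / t)" by simp
    ultimately show "t \<in> (\<lambda>u::real. 1 / u) ` {0<..<1}" by (rule rev_image_eqI)
  qed
qed

lemma inv_inj: "inj_on (\<lambda>u::real. 1 / u) {0<..<1}"
  by (rule inj_onI) auto



lemma psi_image: "(\<lambda>u::real. 4 * u / (1 - u)^2) ` {0<..<1} = {0<..}"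
proof
  show "(\<lambda>u::real. 4 * u / (1 - u)^2) ` {0<..<1} \<subseteq> {0<..}"
  proof
    fix y assume "y \<in> (\<lambda>u::real. 4 * u / (1 - u)^2) ` {0<..<1}"
    then obtain u where u: "u \<in> {0<..<1}" "y = 4 * u / (1 - u)^2" by blast
    have "(1 - u)^2 > 0" using u(1) by simp
    then show "y \<in> {0<..}" using u by (simp add: divide_pos_pos)
  qed
  show "{0<..} \<subseteq> (\<lambda>u::real. 4 * u / (1 - u)^2) ` {0<..<1}"
  proof
    fix t :: real assume t: "t \<in> {0<..}"
    define w where "w = sqrt (1 + t)"
    have w1: "w > 1" unfolding w_def using t by simp
    have w2: "w^2 = 1 + t" unfolding w_def using t by simp
    define u where "u = (w - 1) / (w + 1)"
    have u0: "u > 0" unfolding u_def using w1 by (simp add: divide_pos_pos)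
    have u1: "u < 1" unfolding u_def using w1 by (simp add: divide_less_eq)
    have "4 * u / (1 - u)^2 = (w - 1) * (w + 1)"
    proof -
      have "w + 1 \<noteq> 0" using w1 by simp
      then have "1 - u = 2 / (w + 1)" unfolding u_def by (simp add: field_simps)
      then show ?thesis unfolding u_def using \<open>w + 1 \<noteq> 0\<close> by (simp add: field_simps power2_eq_square)
    qed
    also have "\<dots> = t" using w2 by (simp add: algebra_simps power2_eq_square)
    finally have "t = 4 * u / (1 - u)^2" by simp
    moreover have "u \<in> {0<..<1}" using u0 u1 by simp
    ultimately show "t \<in> (\<lambda>u::real. 4 * u / (1 - u)^2) ` {0<..<1}" by (rule image_eqI)
  qed
qed



lemma geo_eq:
  fixes A B :: "complex^'n^'n"
  assumes aA: "accr A" and aB: "accr B"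
  defines "P \<equiv> matrix_inv A" and "Q \<equiv> matrix_inv B"
  shows "integral {0<..} (\<lambda>t. t powr (1/2 - 1) *\<^sub>R
            matrix_inv (matrix_inv ((A + B) /\<^sub>R 2) + t *\<^sub>R matrix_inv (matrix_inv ((P + Q) /\<^sub>R 2))))
         = integral {0<..} (gP P Q)"
proof -
  have aP: "accr P" unfolding P_def by (rule accr_inv[OF aA])
  have aQ: "accr Q" unfolding Q_def by (rule accr_inv[OF aB])
  let ?g = "gP P Q"
  have G: "?g absolutely_integrable_on {0<..}" by (rule gP_absint[OF aP aQ])
  have G1: "?g absolutely_integrable_on {0<..<1}"
    by (rule set_integrable_subset[OF G]) auto
  have G2: "?g absolutely_integrable_on {1<..}"
    by (rule set_integrable_subset[OF G]) auto
  define I1 where "I1 = integral {0<..<1} ?g"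
  define I2 where "I2 = integral {1<..} ?g"
  have split: "integral {0<..} ?g = I1 + I2"
  proof -
    have "(?g has_integral I1) {0<..<1}" unfolding I1_def
      using set_lebesgue_integral_eq_integral(1)[OF G1] by (rule integrable_integral)
    moreover have "(?g has_integral I2) {1<..}" unfolding I2_def
      using set_lebesgue_integral_eq_integral(1)[OF G2] by (rule integrable_integral)
    ultimately have "(?g has_integral (I1 + I2)) ({0<..<1} \<union> {1<..})"
    proof (rule has_integral_Un)
      have "{0<..<1} \<inter> {1<..} = ({}::real set)" by auto
      then show "negligible ({0<..<1} \<inter> {1::real<..})" by simp
    qed
    moreover have "(?g has_integral (I1 + I2)) ({0<..<1} \<union> {1<..}) \<longleftrightarrow> (?g has_integral (I1 + I2)) {0<..}"
    proof (rule has_integral_spike_set_eq)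
      have "{x \<in> {0<..<1} \<union> {1<..} - {0<..}. ?g x \<noteq> 0} = {}" by auto
      then show "negligible {x \<in> {0<..<1} \<union> {1<..} - {0<..}. ?g x \<noteq> 0}" by (simp only: negligible_empty)
      have "{x \<in> {0<..} - ({0<..<1} \<union> {1<..}). ?g x \<noteq> 0} \<subseteq> {1::real}" by auto
      then show "negligible {x \<in> {0<..} - ({0<..<1} \<union> {1<..}). ?g x \<noteq> 0}"
        by (rule negligible_subset[OF negligible_sing])
    qed
    ultimately show ?thesis by (simp add: integral_unique)
  qed
  have sub1: "(\<lambda>u. \<bar>- (1 / u^2)\<bar> *\<^sub>R ?g (1 / u)) absolutely_integrable_on {0<..<1} \<and>
              integral {0<..<1} (\<lambda>u. \<bar>- (1 / u^2)\<bar> *\<^sub>R ?g (1 / u)) = I2"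
    using has_absolute_integral_change_of_variables_real[of "{0<..<1}" "\<lambda>u. 1 / u" "\<lambda>u. - (1 / u^2)" ?g I2]
      inv_deriv inv_inj G2 unfolding inv_image I2_def by auto
  have H1: "(\<lambda>u. (1 / u^2) *\<^sub>R ?g (1 / u)) absolutely_integrable_on {0<..<1}"
    and H2: "integral {0<..<1} (\<lambda>u. (1 / u^2) *\<^sub>R ?g (1 / u)) = I2"
    using sub1 by simp_all
  define F where "F u = ?g u + (1 / u^2) *\<^sub>R ?g (1 / u)" for u
  have FI: "F absolutely_integrable_on {0<..<1}" unfolding F_def
    by (rule set_integral_add(1)[OF G1 H1])
  have Fint: "integral {0<..<1} F = I1 + I2" unfolding F_def I1_def
    by (subst integral_add) (use set_lebesgue_integral_eq_integral(1)[OF G1] set_lebesgue_integral_eq_integral(1)[OF H1] H2 in auto)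
  define h where "h t = t powr (1/2 - 1) *\<^sub>R
            matrix_inv (matrix_inv ((A + B) /\<^sub>R 2) + t *\<^sub>R matrix_inv (matrix_inv ((P + Q) /\<^sub>R 2)))" for t
  have pw: "\<bar>4 * (1 + u) / (1 - u)^3\<bar> *\<^sub>R h (4 * u / (1 - u)^2) = F u" if "u \<in> {0<..<1}" for u
    unfolding h_def F_def P_def Q_def using pointwise[OF aA aB, of u] that by simp
  have L: "(\<lambda>u. \<bar>4 * (1 + u) / (1 - u)^3\<bar> *\<^sub>R h (4 * u / (1 - u)^2)) absolutely_integrable_on {0<..<1} \<and>
           integral {0<..<1} (\<lambda>u. \<bar>4 * (1 + u) / (1 - u)^3\<bar> *\<^sub>R h (4 * u / (1 - u)^2)) = I1 + I2"
  proof
    show "(\<lambda>u. \<bar>4 * (1 + u) / (1 - u)^3\<bar> *\<^sub>R h (4 * u / (1 - u)^2)) absolutely_integrable_on {0<..<1}"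
      using FI by (subst set_integrable_cong[OF refl refl pw]) auto
    show "integral {0<..<1} (\<lambda>u. \<bar>4 * (1 + u) / (1 - u)^3\<bar> *\<^sub>R h (4 * u / (1 - u)^2)) = I1 + I2"
      using Fint by (subst integral_cong[OF pw]) auto
  qed
  have "h absolutely_integrable_on {0<..} \<and> integral {0<..} h = I1 + I2"
    using has_absolute_integral_change_of_variables_real[of "{0<..<1}" "\<lambda>u. 4 * u / (1 - u)^2"
        "\<lambda>u. 4 * (1 + u) / (1 - u)^3" h "I1 + I2"] psi_deriv psi_inj L
    unfolding psi_image by auto
  then show ?thesis using split unfolding h_def by simp
qed



lemma adj_add: "adjoint_mat (X + Y) = adjoint_mat X + adjoint_mat Y"
  by (simp add: adjoint_mat_def vec_eq_iff)

lemma adj_scaleR: "adjoint_mat (c *\<^sub>R (X::complex^'n^'n)) = c *\<^sub>R adjoint_mat X"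
  unfolding adjoint_mat_def vec_eq_iff by (simp add: scaleR_comp2)

lemma herm_ReM: "hermitian_mat (ReM M)"
  unfolding hermitian_mat_def ReM_def adj_scaleR adj_add by (simp add: add.commute)

lemma loewner_scale:
  fixes H :: "complex^'n^'n"
  assumes "hermitian_mat H" "\<And>x. 0 \<le> Re (cinner (H *v x) x)" "a \<le> b"
  shows "loewner_le (a *\<^sub>R H) (b *\<^sub>R H)"
proof -
  have e: "b *\<^sub>R H - a *\<^sub>R H = (b - a) *\<^sub>R H" by (simp add: scaleR_diff_left)
  have "hermitian_mat ((b - a) *\<^sub>R H)"
    using assms(1) unfolding hermitian_mat_def adj_scaleR by simp
  moreover have "0 \<le> Re (cinner (((b - a) *\<^sub>R H) *v x) x)" for x
    unfolding mv_scaleR_left cinner_scaleR_left using assms(2)[of x] assms(3) by simp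
  ultimately show ?thesis unfolding loewner_le_def pos_semidef_def e by blast
qed

lemma gP_psd:
  fixes P Q :: "complex^'n^'n"
  assumes aP: "accr P" and aQ: "accr Q"
  shows "0 \<le> Re (cinner (integral {0<..} (gP P Q) *v x) x)"
proof -
  define L where "L M = Re (cinner ((M::complex^'n^'n) *v x) x)" for M
  have lin: "linear L"
    by (rule linearI) (simp_all add: L_def matrix_vector_mult_add_rdistrib cinner_add_left mv_scaleR_left cinner_scaleR_left)
  then have bl: "bounded_linear L" using linear_conv_bounded_linear by blast
  have int: "gP P Q integrable_on {0<..}"
    using set_lebesgue_integral_eq_integral(1)[OF gP_absint[OF aP aQ]] .
  have "L (integral {0<..} (gP P Q)) = integral {0<..} (L \<circ> gP P Q)"
    by (rule integral_linear[OF int bl, symmetric])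
  also have "\<dots> \<ge> 0"
  proof (rule integral_nonneg)
    show "(L \<circ> gP P Q) integrable_on {0<..}" by (rule integrable_linear[OF int bl])
    fix t :: real assume t: "t \<in> {0<..}"
    have ai: "accr (matrix_inv (P + t *\<^sub>R Q))" using accr_inv[OF accr_add[OF aP aQ]] t by simp
    have "0 \<le> Re (cinner (matrix_inv (P + t *\<^sub>R Q) *v x) x)"
    proof (cases "x = 0")
      case True then show ?thesis by (simp add: cinner_def)
    next
      case False then show ?thesis using ai unfolding accr_def by (simp add: less_imp_le)
    qed
    then show "0 \<le> (L \<circ> gP P Q) t"
      unfolding L_def gP_def comp_def mv_scaleR_left cinner_scaleR_left by simp
  qed
  finally show ?thesis unfolding L_def .
qed

theorem mainTheorem5:
  fixes A B :: "complex^'n^'n" and \<alpha> :: real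
  assumes "accretive A" and "accretive B"
    and "0 \<le> \<alpha>" and "\<alpha> < pi / 2"
    and "numerical_range A \<subseteq> sector \<alpha>" and "numerical_range B \<subseteq> sector \<alpha>"
  shows "loewner_le ((cos \<alpha> ^ 3) *\<^sub>R ReM (geo_mean (arith_mean A B) (harm_mean A B))) (ReM (geo_mean A B))
       \<and> loewner_le (ReM (geo_mean A B)) ((1 / cos \<alpha> ^ 2) *\<^sub>R ReM (geo_mean (arith_mean A B) (harm_mean A B)))"
proof -
  have aA: "accr A" and aB: "accr B" using assms(1,2) accretive_accr by auto
  have aP: "accr (matrix_inv A)" and aQ: "accr (matrix_inv B)" using accr_inv aA aB by auto
  have gAB: "geo_mean A B = (sin (1/2 * pi) / pi) *\<^sub>R integral {0<..} (gP (matrix_inv A) (matrix_inv B))"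
    unfolding geo_mean_def wgeo_mean_def gP_def ..
  have gCD: "geo_mean (arith_mean A B) (harm_mean A B) = geo_mean A B"
    unfolding geo_mean_def wgeo_mean_def arith_mean_def harm_mean_def
    unfolding geo_eq[OF aA aB]
    unfolding gP_def ..
  define H where "H = ReM (geo_mean A B)"
  have herm: "hermitian_mat H" unfolding H_def by (rule herm_ReM)
  have psd: "0 \<le> Re (cinner (H *v x) x)" for x
  proof -
    have c: "sin (1/2 * pi) / pi \<ge> 0" by simp
    have "Re (cinner (H *v x) x) = Re (cinner (geo_mean A B *v x) x)" unfolding H_def by (rule ReM_Re)
    also have "\<dots> = (sin (1/2 * pi) / pi) * Re (cinner (integral {0<..} (gP (matrix_inv A) (matrix_inv B)) *v x) x)"
      unfolding gAB mv_scaleR_left cinner_scaleR_left by simp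
    also have "\<dots> \<ge> 0" using c gP_psd[OF aP aQ, of x] by simp
    finally show ?thesis .
  qed
  have cpos: "cos \<alpha> > 0" using assms(3,4) pi_gt_zero by (intro cos_gt_zero_pi) linarith+
  have cle: "cos \<alpha> \<le> 1" by simp
  have c3: "cos \<alpha> ^ 3 \<le> 1" using cpos cle by (intro power_le_one) auto
  have c2: "1 \<le> 1 / cos \<alpha> ^ 2"
  proof -
    have "cos \<alpha> ^ 2 \<le> 1" using cpos cle by (intro power_le_one) auto
    moreover have "cos \<alpha> ^ 2 > 0" using cpos by simp
    ultimately show ?thesis by simp
  qed
  have L1: "loewner_le ((cos \<alpha> ^ 3) *\<^sub>R H) (1 *\<^sub>R H)" by (rule loewner_scale[OF herm psd c3])
  have L2: "loewner_le (1 *\<^sub>R H) ((1 / cos \<alpha> ^ 2) *\<^sub>R H)" by (rule loewner_scale[OF herm psd c2])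
  show ?thesis using L1 L2 unfolding gCD H_def by simp
qed


end
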